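(* Let $G$ be a connected graph and let $uv$ be a cut edge of $G$ that is not pendent (i.e. $d_G(u)\ge 2$ and $d_G(v)\ge 2$). Let $G'$ be the graph obtained from $G$ by contracting the edge $uv$ onto the vertex $u$ (so $u$ becomes adjacent to all former neighbors of $u$ and of $v$ other than $u,v$) and then adding a new pendent vertex (named $v$) adjacent to $u$. Then $SO(G)<SO(G')$.
   Context: For a graph $G$, $d_G(w)$ denotes the degree of vertex $w$, and the Sombor index is $SO(G)=\sum_{ab\in E(G)}\sqrt{d_G(a)^2+d_G(b)^2}$. A cut edge is an edge whose deletion disconnects the graph; it is pendent if one of its end vertices has degree one. *)

theory Defs
  imports Complex_Main
begin

definition simple_graph :: "'a set \<Rightarrow> 'a set set \<Rightarrow> bool" where
  "simple_graph V E \<longleftrightarrow> finite V \<and>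
     (\<forall>e\<in>E. \<exists>a b. a \<noteq> b \<and> e = {a, b} \<and> a \<in> V \<and> b \<in> V)"

definition graph_connected :: "'a set \<Rightarrow> 'a set set \<Rightarrow> bool" where
  "graph_connected V E \<longleftrightarrow> V \<noteq> {} \<and>
     (\<forall>x\<in>V. \<forall>y\<in>V. (x, y) \<in> {(a, b). {a, b} \<in> E}\<^sup>*)"

definition cut_edge :: "'a set \<Rightarrow> 'a set set \<Rightarrow> 'a set \<Rightarrow> bool" where
  "cut_edge V E e \<longleftrightarrow> e \<in> E \<and> graph_connected V E \<and> \<not> graph_connected V (E - {e})"

definition degree :: "'a set set \<Rightarrow> 'a \<Rightarrow> nat" where
  "degree E w = card {e \<in> E. w \<in> e}"

definition sombor :: "'a set set \<Rightarrow> real" where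
  "sombor E = (\<Sum>e\<in>E. sqrt (\<Sum>w\<in>e. (real (degree E w))\<^sup>2))"

text \<open>Contract edge uv onto u, then attach new pendent vertex (named v) to u.
  The vertex set is unchanged.\<close>
definition contract_and_pend :: "'a set set \<Rightarrow> 'a \<Rightarrow> 'a \<Rightarrow> 'a set set" where
  "contract_and_pend E u v =
     {e \<in> E. u \<notin> e \<and> v \<notin> e}
     \<union> {{u, x} | x. x \<noteq> u \<and> x \<noteq> v \<and> ({u, x} \<in> E \<or> {v, x} \<in> E)}
     \<union> {{u, v}}"

end

theory Submission
  imports Defs
begin

lemma sg_edge:
  assumes "simple_graph V E" "e \<in> E" "w \<in> e"
  shows "\<exists>x. x \<noteq> w \<and> e = {w, x}"
  using assms unfolding simple_graph_def by fastforce

lemma sg_vert: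
  assumes "simple_graph V E" "{a, b} \<in> E"
  shows "b \<in> V"
  using assms unfolding simple_graph_def by (fastforce simp: doubleton_eq_iff)

lemma sg_finite:
  assumes "simple_graph V E"
  shows "finite E"
proof -
  have "E \<subseteq> Pow V" using assms unfolding simple_graph_def by fastforce
  moreover have "finite V" using assms unfolding simple_graph_def by auto
  ultimately show ?thesis by (meson finite_Pow_iff finite_subset)
qed

lemma inj_pair: "u \<notin> S \<Longrightarrow> inj_on (\<lambda>x. {u, x}) S"
  by (auto simp: inj_on_def doubleton_eq_iff)

theorem lemma3p1:
  fixes V :: "'a set" and E :: "'a set set" and u v :: 'a
  assumes "simple_graph V E"
    and "graph_connected V E"
    and "u \<noteq> v"
    and "{u, v} \<in> E"
    and "cut_edge V E {u, v}"
    and "degree E u \<ge> 2"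
    and "degree E v \<ge> 2"
  shows "sombor E < sombor (contract_and_pend E u v)"
proof -
  note sg = assms(1)
  define R where "R = {e\<in>E. u \<notin> e \<and> v \<notin> e}"
  define A where "A = {x. x \<noteq> u \<and> x \<noteq> v \<and> {u, x} \<in> E}"
  define B where "B = {x. x \<noteq> u \<and> x \<noteq> v \<and> {v, x} \<in> E}"
  define E' where "E' = contract_and_pend E u v"
  have finE: "finite E" using sg_finite[OF sg] .
  have finV: "finite V" using sg unfolding simple_graph_def by auto
  have "A \<subseteq> V" using sg_vert[OF sg] unfolding A_def by blast
  then have finA: "finite A" using finV finite_subset by blast
  have "B \<subseteq> V" using sg_vert[OF sg] unfolding B_def by blast
  then have finB: "finite B" using finV finite_subset by blast
  have finR: "finite R" using finE unfolding R_def by auto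
  have AB: "A \<inter> B = {}"
  proof (rule ccontr)
    assume "A \<inter> B \<noteq> {}"
    then obtain w where w: "w \<in> A" "w \<in> B" by auto
    define S where "S = {(a, b). {a, b} \<in> E}"
    define S' where "S' = {(a, b). {a, b} \<in> E - {{u, v}}}"
    have uw: "(u, w) \<in> S'" "(w, u) \<in> S'" using w unfolding S'_def A_def
      by (auto simp: doubleton_eq_iff insert_commute)
    have vw: "(v, w) \<in> S'" "(w, v) \<in> S'" using w unfolding S'_def B_def
      by (auto simp: doubleton_eq_iff insert_commute)
    have "S \<subseteq> S'\<^sup>*"
    proof
      fix p assume "p \<in> S"
      then obtain a b where p: "p = (a, b)" "{a, b} \<in> E" unfolding S_def by auto
      show "p \<in> S'\<^sup>*"
      proof (cases "{a, b} = {u, v}")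
        case True
        then have "(a = u \<and> b = v) \<or> (a = v \<and> b = u)" by (auto simp: doubleton_eq_iff)
        then show ?thesis using uw vw p
          by (meson converse_rtrancl_into_rtrancl r_into_rtrancl)
      next
        case False
        then have "(a, b) \<in> S'" using p unfolding S'_def by auto
        then show ?thesis using p by auto
      qed
    qed
    then have "S\<^sup>* \<subseteq> S'\<^sup>*" by (rule rtrancl_subset_rtrancl)
    then have "graph_connected V (E - {{u, v}})"
      using assms(2) unfolding graph_connected_def S_def S'_def by blast
    with assms(5) show False by (simp add: cut_edge_def)
  qed
  have uA: "u \<notin> A" "v \<notin> A" and uB: "u \<notin> B" "v \<notin> B" unfolding A_def B_def by auto
  have Eeq: "E = R \<union> ((\<lambda>x. {u, x}) ` A \<union> ((\<lambda>x. {v, x}) ` B \<union> {{u, v}}))"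
  proof
    show "E \<subseteq> R \<union> ((\<lambda>x. {u, x}) ` A \<union> ((\<lambda>x. {v, x}) ` B \<union> {{u, v}}))"
    proof
      fix e assume e: "e \<in> E"
      show "e \<in> R \<union> ((\<lambda>x. {u, x}) ` A \<union> ((\<lambda>x. {v, x}) ` B \<union> {{u, v}}))"
      proof (cases "u \<in> e")
        case True
        then obtain x where x: "x \<noteq> u" "e = {u, x}" using sg_edge[OF sg e] by blast
        then show ?thesis using e unfolding A_def by (cases "x = v") auto
      next
        case nu: False
        show ?thesis
        proof (cases "v \<in> e")
          case True
          then obtain x where x: "x \<noteq> v" "e = {v, x}" using sg_edge[OF sg e] by blast
          then show ?thesis using e nu unfolding B_def by auto
        next
          case False
          then show ?thesis using e nu unfolding R_def by auto
        qed
      qed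
    qed
    show "R \<union> ((\<lambda>x. {u, x}) ` A \<union> ((\<lambda>x. {v, x}) ` B \<union> {{u, v}})) \<subseteq> E"
      using assms(4) unfolding R_def A_def B_def by auto
  qed
  have E'eq: "E' = R \<union> ((\<lambda>x. {u, x}) ` (A \<union> B) \<union> {{u, v}})"
    unfolding E'_def contract_and_pend_def R_def A_def B_def by blast
  have d1: "{e\<in>E. u \<in> e} = insert {u, v} ((\<lambda>x. {u, x}) ` A)"
    using assms(3) by (subst Eeq, auto simp: R_def B_def)
  have dEu: "degree E u = card A + 1"
    unfolding degree_def d1 using finA uA inj_pair[of u A]
    by (subst card_insert_disjoint) (auto simp: card_image doubleton_eq_iff)
  have d2: "{e\<in>E. v \<in> e} = insert {v, u} ((\<lambda>x. {v, x}) ` B)"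
    using assms(3) by (subst Eeq, auto simp: R_def A_def insert_commute)
  have dEv: "degree E v = card B + 1"
    unfolding degree_def d2 using finB uB inj_pair[of v B]
    by (subst card_insert_disjoint) (auto simp: card_image doubleton_eq_iff)
  have d3: "{e\<in>E'. u \<in> e} = insert {u, v} ((\<lambda>x. {u, x}) ` (A \<union> B))"
    using assms(3) by (subst E'eq, auto simp: R_def)
  have dE'u: "degree E' u = card A + card B + 1"
  proof -
    have "card ((\<lambda>x. {u, x}) ` (A \<union> B)) = card A + card B"
      using inj_pair[of u "A \<union> B"] uA uB finA finB AB
      by (simp add: card_image card_Un_disjoint)
    then show ?thesis
      unfolding degree_def d3 using finA finB uA uB
      by (subst card_insert_disjoint) (auto simp: doubleton_eq_iff)
  qed
  have d4: "{e\<in>E'. v \<in> e} = {{u, v}}"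
    using assms(3) by (subst E'eq, auto simp: R_def A_def B_def)
  have dE'v: "degree E' v = 1" unfolding degree_def d4 by simp
  have dx: "degree E' x = degree E x" if x: "x \<noteq> u" "x \<noteq> v" for x
  proof -
    define Rx where "Rx = {e\<in>R. x \<in> e}"
    have fR: "finite Rx" using finR unfolding Rx_def by auto
    have nR: "{u, x} \<notin> Rx" "{v, x} \<notin> Rx" unfolding Rx_def R_def by auto
    have m1: "x \<in> {u, y} \<longleftrightarrow> y = x" "x \<in> {v, y} \<longleftrightarrow> y = x" for y using x by auto
    have eE: "{e\<in>E. x \<in> e} = Rx \<union> ((\<lambda>y. {u, y}) ` (A \<inter> {x}) \<union> ((\<lambda>y. {v, y}) ` (B \<inter> {x})))"
      unfolding Rx_def using x m1 by (subst Eeq) blast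
    have eE': "{e\<in>E'. x \<in> e} = Rx \<union> ((\<lambda>y. {u, y}) ` ((A \<union> B) \<inter> {x}))"
      unfolding Rx_def using x m1 by (subst E'eq) blast
    consider "x \<in> A" | "x \<in> B" | "x \<notin> A" "x \<notin> B" by blast
    then show ?thesis
    proof cases
      case 1
      then have "A \<inter> {x} = {x}" "B \<inter> {x} = {}" "(A \<union> B) \<inter> {x} = {x}" using AB by auto
      then show ?thesis unfolding degree_def eE eE' by simp
    next
      case 2
      then have "A \<inter> {x} = {}" "B \<inter> {x} = {x}" "(A \<union> B) \<inter> {x} = {x}" using AB by auto
      then show ?thesis unfolding degree_def eE eE' using fR nR by simp
    next
      case 3
      then have "A \<inter> {x} = {}" "B \<inter> {x} = {}" "(A \<union> B) \<inter> {x} = {}" by auto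
      then show ?thesis unfolding degree_def eE eE' by simp
    qed
  qed
  define f where "f = (\<lambda>e. sqrt (\<Sum>w\<in>e. (real (degree E w))\<^sup>2))"
  define f' where "f' = (\<lambda>e. sqrt (\<Sum>w\<in>e. (real (degree E' w))\<^sup>2))"
  define UA where "UA = (\<lambda>x. {u, x}) ` A"
  define UB where "UB = (\<lambda>x. {u, x}) ` B"
  define VB where "VB = (\<lambda>x. {v, x}) ` B"
  have fUA: "finite UA" "finite UB" "finite VB" using finA finB by (auto simp: UA_def UB_def VB_def)
  have dj1: "R \<inter> (UA \<union> (VB \<union> {{u, v}})) = {}" by (auto simp: R_def UA_def VB_def)
  have dj2: "UA \<inter> (VB \<union> {{u, v}}) = {}" using uA uB assms(3)
    by (auto simp: UA_def VB_def doubleton_eq_iff)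
  have dj3: "VB \<inter> {{u, v}} = {}" using uB by (auto simp: VB_def doubleton_eq_iff)
  have dj1': "R \<inter> (UA \<union> (UB \<union> {{u, v}})) = {}" by (auto simp: R_def UA_def UB_def)
  have dj2': "UA \<inter> (UB \<union> {{u, v}}) = {}" using uA uB AB
    by (auto simp: UA_def UB_def doubleton_eq_iff)
  have dj3': "UB \<inter> {{u, v}} = {}" using uB by (auto simp: UB_def doubleton_eq_iff)
  have sE: "sombor E = sum f R + (sum f UA + (sum f VB + f {u, v}))"
  proof -
    have "sombor E = sum f E" by (simp add: sombor_def f_def)
    also have "\<dots> = sum f (R \<union> (UA \<union> (VB \<union> {{u, v}})))" using Eeq by (simp add: UA_def VB_def)
    also have "\<dots> = sum f R + (sum f UA + (sum f VB + f {u, v}))"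
      using finR fUA dj1 dj2 dj3 by (simp add: sum.union_disjoint)
    finally show ?thesis .
  qed
  have sE': "sombor E' = sum f' R + (sum f' UA + (sum f' UB + f' {u, v}))"
  proof -
    have "sombor E' = sum f' E'" by (simp add: sombor_def f'_def)
    also have "\<dots> = sum f' (R \<union> (UA \<union> (UB \<union> {{u, v}})))" using E'eq
      by (simp add: UA_def UB_def image_Un Un_assoc)
    also have "\<dots> = sum f' R + (sum f' UA + (sum f' UB + f' {u, v}))"
      using finR fUA dj1' dj2' dj3' by (simp add: sum.union_disjoint)
    finally show ?thesis .
  qed
  have aR: "sum f R = sum f' R"
  proof (rule sum.cong)
    fix e assume "e \<in> R"
    then have "\<forall>w\<in>e. w \<noteq> u \<and> w \<noteq> v" by (auto simp: R_def)
    then show "f e = f' e" unfolding f_def f'_def using dx by (metis (no_types, lifting) sum.cong)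
  qed simp
  define a where "a = real (card A)"
  define b where "b = real (card B)"
  have a1: "a \<ge> 1" using assms(6) dEu by (simp add: a_def)
  have b1: "b \<ge> 1" using assms(7) dEv by (simp add: b_def)
  have Aex: "A \<noteq> {}" using a1 a_def by auto
  have neA: "\<And>x. x \<in> A \<Longrightarrow> u \<noteq> x" "\<And>x. x \<in> B \<Longrightarrow> u \<noteq> x" "\<And>x. x \<in> B \<Longrightarrow> v \<noteq> x"
    using uA uB by auto
  have dxAB: "\<And>x. x \<in> A \<Longrightarrow> degree E' x = degree E x" "\<And>x. x \<in> B \<Longrightarrow> degree E' x = degree E x"
    using dx uA uB by metis+
  have sUA: "sum f UA = (\<Sum>x\<in>A. sqrt ((a + 1)\<^sup>2 + (real (degree E x))\<^sup>2))"
    unfolding UA_def using inj_pair[OF uA(1)] uA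
    by (simp add: sum.reindex f_def dEu a_def) (rule sum.cong, auto simp: dEu neA)
  have sVB: "sum f VB = (\<Sum>x\<in>B. sqrt ((b + 1)\<^sup>2 + (real (degree E x))\<^sup>2))"
    unfolding VB_def using inj_pair[OF uB(2)] uB
    by (simp add: sum.reindex f_def dEv b_def) (rule sum.cong, auto simp: dEv neA)
  have sUA': "sum f' UA = (\<Sum>x\<in>A. sqrt ((a + b + 1)\<^sup>2 + (real (degree E x))\<^sup>2))"
    unfolding UA_def using inj_pair[OF uA(1)] uA
    by (simp add: sum.reindex f'_def) (rule sum.cong, auto simp: dE'u dxAB a_def b_def neA algebra_simps)
  have sUB': "sum f' UB = (\<Sum>x\<in>B. sqrt ((a + b + 1)\<^sup>2 + (real (degree E x))\<^sup>2))"
    unfolding UB_def using inj_pair[OF uB(1)] uB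
    by (simp add: sum.reindex f'_def) (rule sum.cong, auto simp: dE'u dxAB a_def b_def neA algebra_simps)
  have fuv: "f {u, v} = sqrt ((a + 1)\<^sup>2 + (b + 1)\<^sup>2)"
    using assms(3) by (simp add: f_def dEu dEv a_def b_def add.commute)
  have fuv': "f' {u, v} = sqrt ((a + b + 1)\<^sup>2 + 1)"
    using assms(3) by (simp add: f'_def dE'u dE'v a_def b_def add.commute)
  have i1: "sum f UA < sum f' UA"
    unfolding sUA sUA' using finA Aex
  proof (intro sum_strict_mono)
    fix x show "sqrt ((a + 1)\<^sup>2 + (real (degree E x))\<^sup>2) < sqrt ((a + b + 1)\<^sup>2 + (real (degree E x))\<^sup>2)"
      using a1 b1 by (simp add: power_strict_mono)
  qed auto
  have i2: "sum f VB \<le> sum f' UB"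
    unfolding sVB sUB'
  proof (intro sum_mono)
    fix x show "sqrt ((b + 1)\<^sup>2 + (real (degree E x))\<^sup>2) \<le> sqrt ((a + b + 1)\<^sup>2 + (real (degree E x))\<^sup>2)"
      using a1 b1 by (simp add: power_mono)
  qed
  have i3: "f {u, v} \<le> f' {u, v}"
    unfolding fuv fuv'
  proof -
    have "(a + 1)\<^sup>2 + (b + 1)\<^sup>2 \<le> (a + b + 1)\<^sup>2 + 1"
      using a1 b1 by (simp add: power2_eq_square algebra_simps)
    then show "sqrt ((a + 1)\<^sup>2 + (b + 1)\<^sup>2) \<le> sqrt ((a + b + 1)\<^sup>2 + 1)" by simp
  qed
  show ?thesis unfolding E'_def[symmetric] sE sE' aR using i1 i2 i3 by linarith
qed

end
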